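(* Let $\mathcal N=\mathbb N$ or $\mathcal N=\{1,\dots,n\}$ with $n\ge2$, and let $\mathbf c=(c_i)_{i\in\mathcal N}$ be real numbers with $\inf_{i\in\mathcal N}c_i>0$. Let $\mathcal P$ be the set of sequences $\mathbf p=(p_i)_{i\in\mathcal N}$ with $p_i\ge0$, $\sum_i p_i=1$, $\sum_i p_ic_i<\infty$, and for $\mathbf p\in\mathcal P$ let $$H(\mathbf p)=-\Big(\sum_{i\in\mathcal N}p_i\log p_i\Big)\Big(\sum_{i\in\mathcal N}p_ic_i\Big)^{-1}\in[0,+\infty]$$ (with $0\log0=0$). If $\mathbf p\in\mathcal P$ satisfies $p_k=0$ for some $k\in\mathcal N$, then there exists $\mathbf p'\in\mathcal P$ with $p'_i>0$ for all $i\in\mathcal N$ such that $H(\mathbf p')\ge H(\mathbf p)$, and the inequality is strict when $H(\mathbf p)<\infty$. *)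

theory Defs
  imports "HOL-Analysis.Analysis"
begin

definition admissible_index :: "nat set \<Rightarrow> bool" where
  "admissible_index I \<longleftrightarrow> I = UNIV \<or> (\<exists>n::nat. n \<ge> 2 \<and> I = {1..n})"

definition plogp :: "real \<Rightarrow> real" where
  "plogp x = (if x = 0 then 0 else x * ln x)"

definition probP :: "nat set \<Rightarrow> (nat \<Rightarrow> real) \<Rightarrow> (nat \<Rightarrow> real) \<Rightarrow> bool" where
  "probP I c p \<longleftrightarrow> (\<forall>i\<in>I. p i \<ge> 0) \<and> (p has_sum 1) I \<and> (\<lambda>i. p i * c i) summable_on I"

definition entropy :: "nat set \<Rightarrow> (nat \<Rightarrow> real) \<Rightarrow> ennreal" where
  "entropy I p = (\<Sum>\<^sub>\<infinity>i\<in>I. ennreal (- plogp (p i)))"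

definition Hrate :: "nat set \<Rightarrow> (nat \<Rightarrow> real) \<Rightarrow> (nat \<Rightarrow> real) \<Rightarrow> ennreal" where
  "Hrate I c p = entropy I p / ennreal (\<Sum>\<^sub>\<infinity>i\<in>I. p i * c i)"

end

theory Submission
  imports Defs
begin

lemma infsum_cmult_ennreal:
  fixes f :: "'a \<Rightarrow> ennreal"
  assumes "c < top"
  shows "infsum (\<lambda>i. c * f i) A = c * infsum f A"
proof -
  have "(sum f \<longlongrightarrow> infsum f A) (finite_subsets_at_top A)"
    using has_sum_infsum[of f A] nonneg_summable_on_complete[of A f] unfolding has_sum_def by simp
  from ennreal_tendsto_cmult[OF assms this]
  have "((\<lambda>X. sum (\<lambda>i. c * f i) X) \<longlongrightarrow> c * infsum f A) (finite_subsets_at_top A)"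
    by (simp add: sum_distrib_left)
  then have "((\<lambda>i. c * f i) has_sum (c * infsum f A)) A" unfolding has_sum_def .
  then show ?thesis by (rule infsumI)
qed

lemma plogp_nonpos:
  fixes x :: real
  assumes "0 \<le> x" "x \<le> 1"
  shows "- plogp x \<ge> 0"
  using assms unfolding plogp_def by (simp add: mult_nonneg_nonpos)

lemma plogp_mix:
  fixes x y t :: real
  assumes "0 \<le> x" "x \<le> 1" "0 < y" "y \<le> 1" "0 < t" "t < 1"
  shows "- plogp ((1-t)*x + t*y) \<ge> (1-t) * (- plogp x)"
proof -
  define a where "a = (1-t)*x + t*y"
  have h1: "(1-t)*x \<ge> 0" using assms by simp
  have h2: "t*y > 0" using assms by simp
  have h3: "(1-t)*x \<le> (1-t)*1" using assms by (intro mult_left_mono) auto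
  have h4: "t*y \<le> t*1" using assms by (intro mult_left_mono) auto
  have a0: "a > 0" unfolding a_def using h1 h2 by linarith
  have h3': "(1-t)*x \<le> 1-t" using h3 by simp
  have h4': "t*y \<le> t" using h4 by simp
  have a1: "a \<le> 1" unfolding a_def using h3' h4' by linarith
  have gy: "y * ln a - y * ln y \<le> a - y"
  proof -
    have "ln (a/y) \<le> a/y - 1" using ln_le_minus_one a0 assms by simp
    then have "y * ln (a/y) \<le> y*(a/y - 1)" using assms by (simp add: mult_left_mono)
    then show ?thesis using assms a0 by (simp add: ln_div right_diff_distrib)
  qed
  have ylny: "y * ln y \<le> 0" using assms by (simp add: mult_nonneg_nonpos)
  show ?thesis
  proof (cases "x = 0")
    case True
    then show ?thesis using a0 a1 unfolding a_def[symmetric] plogp_def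
      by (simp add: mult_nonneg_nonpos)
  next
    case False
    then have x0: "x > 0" using assms by simp
    have gx: "x * ln a - x * ln x \<le> a - x"
    proof -
      have "ln (a/x) \<le> a/x - 1" using ln_le_minus_one a0 x0 by simp
      then have "x * ln (a/x) \<le> x*(a/x - 1)" using x0 by (simp add: mult_left_mono)
      then show ?thesis using x0 a0 by (simp add: ln_div right_diff_distrib)
    qed
    have "(1-t)*(x * ln a - x * ln x) + t*(y * ln a - y * ln y) \<le> (1-t)*(a-x) + t*(a-y)"
      using gx gy assms by (intro add_mono mult_left_mono) auto
    also have "\<dots> = 0" unfolding a_def by (simp add: algebra_simps)
    finally have "a * ln a \<le> (1-t)*(x*ln x) + t*(y*ln y)"
      unfolding a_def by (simp add: algebra_simps)
    moreover have "t*(y*ln y) \<le> 0" using ylny assms by (simp add: mult_nonneg_nonpos)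
    ultimately have "a * ln a \<le> (1-t)*(x*ln x)" by linarith
    then show ?thesis using a0 x0 unfolding a_def[symmetric] plogp_def by simp
  qed
qed

lemma plogp_small:
  fixes y t :: real
  assumes "0 < y" "y \<le> 1" "0 < t" "t < 1"
  shows "- plogp (t*y) \<ge> t * y * (- ln t)"
proof -
  have "ln y \<le> 0" using assms by simp
  then have "- (t*y*ln y) \<ge> 0" using assms by (simp add: mult_nonneg_nonpos)
  then show ?thesis using assms unfolding plogp_def by (simp add: ln_mult algebra_simps)
qed

theorem lemma2p1:
  fixes I :: "nat set" and c p :: "nat \<Rightarrow> real"
  assumes "admissible_index I"
    and "bdd_below (c ` I)" and "(INF i\<in>I. c i) > 0"
    and "probP I c p"
    and "\<exists>k\<in>I. p k = 0"
  shows "\<exists>p'. probP I c p' \<and> (\<forall>i\<in>I. p' i > 0) \<and> Hrate I c p' \<ge> Hrate I c p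
           \<and> (Hrate I c p < \<infinity> \<longrightarrow> Hrate I c p' > Hrate I c p)"
proof -
  from assms(5) obtain k where kI: "k \<in> I" and pk: "p k = 0" by blast
  define m where "m = (INF i\<in>I. c i)"
  have m0: "m > 0" using assms(3) m_def by simp
  have cm: "c i \<ge> m" if "i \<in> I" for i unfolding m_def using assms(2) that by (rule cINF_lower)
  have p0: "\<And>i. i \<in> I \<Longrightarrow> p i \<ge> 0" and p1: "(p has_sum 1) I"
    and pc: "(\<lambda>i. p i * c i) summable_on I"
    using assms(4) unfolding probP_def by auto
  have psum: "p summable_on I" using p1 by (auto simp: summable_on_def)
  have pI: "infsum p I = 1" using p1 by (rule infsumI)
  have ple1: "p i \<le> 1" if "i \<in> I" for i
  proof -
    have "infsum p {i} \<le> infsum p I" by (rule infsum_mono2) (use psum p0 that in auto)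
    then show ?thesis using pI by simp
  qed
  define C where "C = infsum (\<lambda>i. p i * c i) I"
  have C_ge: "C \<ge> m"
  proof -
    have "infsum (\<lambda>i. p i * m) I \<le> C" unfolding C_def
      by (rule infsum_mono) (use psum pc p0 cm in \<open>auto intro: summable_on_cmult_left mult_left_mono\<close>)
    moreover have "infsum (\<lambda>i. p i * m) I = m" using infsum_cmult_left[of m p I] psum pI by simp
    ultimately show ?thesis by simp
  qed
  have C0: "C > 0" using C_ge m0 by simp
  define g :: "nat \<Rightarrow> real" where "g i = (1/2)^i" for i
  have g0: "g i > 0" for i by (simp add: g_def)
  have gs: "g summable_on I"
  proof -
    have "summable g" unfolding g_def by (simp add: summable_geometric)
    then have "g summable_on UNIV" by (subst summable_on_UNIV_nonneg_real_iff) (auto simp: g_def)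
    then show ?thesis by (rule summable_on_subset_banach) simp
  qed
  define w where "w i = g i / (1 + c i)" for i
  have cpos: "c i > 0" if "i \<in> I" for i using cm[OF that] m0 by simp
  have w0: "w i > 0" if "i \<in> I" for i using cpos[OF that] g0[of i] by (simp add: w_def)
  have wleg: "w i \<le> g i" if "i \<in> I" for i
    using cpos[OF that] g0[of i] by (simp add: w_def divide_le_eq)
  have wcleg: "w i * c i \<le> g i" if "i \<in> I" for i
  proof -
    have "w i * c i = g i * (c i / (1 + c i))" by (simp add: w_def)
    also have "\<dots> \<le> g i * 1"
      using cpos[OF that] g0[of i] by (intro mult_left_mono) (auto simp: divide_le_eq)
    finally show ?thesis by simp
  qed
  have ws: "w summable_on I"
    by (rule summable_on_comparison_test[OF gs]) (use wleg w0 in \<open>auto intro: less_imp_le\<close>)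
  have wcs: "(\<lambda>i. w i * c i) summable_on I"
    by (rule summable_on_comparison_test[OF gs]) (use wcleg w0 cpos in \<open>auto intro: less_imp_le\<close>)
  define W where "W = infsum w I"
  have wleW: "w i \<le> W" if "i \<in> I" for i
  proof -
    have "infsum w {i} \<le> infsum w I" by (rule infsum_mono2) (use ws w0 that in \<open>auto intro: less_imp_le\<close>)
    then show ?thesis by (simp add: W_def)
  qed
  have W0: "W > 0" using wleW[OF kI] w0[OF kI] by simp
  define q where "q i = w i / W" for i
  have q0: "q i > 0" if "i \<in> I" for i using w0[OF that] W0 by (simp add: q_def)
  have q1: "q i \<le> 1" if "i \<in> I" for i using wleW[OF that] W0 by (simp add: q_def)
  have qsum: "(q has_sum 1) I"
  proof -
    have "((\<lambda>i. (1/W) * w i) has_sum ((1/W) * W)) I"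
      unfolding W_def by (rule has_sum_cmult_right) (use ws in simp)
    then show ?thesis using W0 by (simp add: q_def[abs_def])
  qed
  have qcs: "(\<lambda>i. q i * c i) summable_on I"
  proof -
    have "(\<lambda>i. (1/W) * (w i * c i)) summable_on I" by (rule summable_on_cmult_right) (rule wcs)
    then show ?thesis by (simp add: q_def)
  qed
  define D where "D = infsum (\<lambda>i. q i * c i) I"
  have D0: "D \<ge> 0" unfolding D_def by (rule infsum_nonneg) (use q0 cpos in \<open>auto intro: less_imp_le\<close>)
  define E where "E = entropy I p"
  define e where "e = enn2real E"
  have e0: "e \<ge> 0" by (simp add: e_def)
  have qk0: "q k > 0" using q0[OF kI] .
  define t where "t = min (1/2) (exp (- (e * D / (q k * C) + 1)))"
  have t0: "0 < t" and t1: "t < 1" and th: "t \<le> 1/2" by (auto simp: t_def)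
  have Lt: "- ln t \<ge> e * D / (q k * C) + 1"
  proof -
    have "ln t \<le> ln (exp (- (e * D / (q k * C) + 1)))"
      using t0 by (subst ln_le_cancel_iff) (auto simp: t_def)
    then show ?thesis by simp
  qed
  define p' where "p' i = (1-t) * p i + t * q i" for i
  have p'pos: "\<forall>i\<in>I. p' i > 0"
  proof
    fix i assume "i \<in> I"
    then have "(1-t) * p i \<ge> 0" "t * q i > 0" using p0 q0 t0 t1 by auto
    then show "p' i > 0" by (simp add: p'_def)
  qed
  have p'sum: "(p' has_sum 1) I"
  proof -
    have "((\<lambda>i. (1-t) * p i + t * q i) has_sum ((1-t) * 1 + t * 1)) I"
      by (intro has_sum_add has_sum_cmult_right p1 qsum)
    then show ?thesis by (simp add: p'_def[abs_def])
  qed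
  define C' where "C' = (1-t)*C + t*D"
  have p'c: "((\<lambda>i. p' i * c i) has_sum C') I"
  proof -
    have "((\<lambda>i. (1-t) * (p i * c i) + t * (q i * c i)) has_sum ((1-t) * C + t * D)) I"
      unfolding C_def D_def by (intro has_sum_add has_sum_cmult_right has_sum_infsum pc qcs)
    then show ?thesis by (simp add: p'_def[abs_def] C'_def algebra_simps)
  qed
  have P': "probP I c p'" unfolding probP_def
    using p'pos p'sum p'c by (auto simp: summable_on_def intro: less_imp_le)
  have C'0: "C' > 0"
  proof -
    have "(1-t)*C > 0" "t*D \<ge> 0" using C0 D0 t0 t1 by auto
    then show ?thesis unfolding C'_def by linarith
  qed
  have C'I: "infsum (\<lambda>i. p' i * c i) I = C'" using p'c by (rule infsumI)
  define E' where "E' = entropy I p'"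
  define L where "L = t * q k * (- ln t)"
  have key: "E' \<ge> ennreal (1-t) * E + ennreal L"
  proof -
    define f where "f i = ennreal (1-t) * ennreal (- plogp (p i))" for i
    define h where "h i = (if i = k then ennreal L else 0)" for i
    have s1: "infsum (\<lambda>i. f i + h i) I = infsum f I + infsum h I" by (rule infsum_add) (auto intro: nonneg_summable_on_complete)
    have s2: "infsum f I = ennreal (1-t) * E" unfolding f_def E_def entropy_def
      by (rule infsum_cmult_ennreal) simp
    have "infsum h I = infsum h {k}" by (rule infsum_cong_neutral) (auto simp: h_def kI)
    then have s3: "infsum h I = ennreal L" by (simp add: h_def)
    have "infsum (\<lambda>i. f i + h i) I \<le> E'" unfolding E'_def entropy_def
    proof (rule infsum_mono)
      fix i assume iI: "i \<in> I"
      show "f i + h i \<le> ennreal (- plogp (p' i))"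
      proof (cases "i = k")
        case True
        have "L \<le> - plogp (t * q k)" unfolding L_def
          using plogp_small[OF qk0 q1[OF kI] t0 t1] by simp
        then show ?thesis using True pk by (simp add: f_def h_def plogp_def p'_def ennreal_leI)
      next
        case False
        have "f i = ennreal ((1-t) * (- plogp (p i)))" unfolding f_def
          using t1 ennreal_mult'[of "1-t" "- plogp (p i)"] by simp
        also have "\<dots> \<le> ennreal (- plogp (p' i))" unfolding p'_def
          by (rule ennreal_leI, rule plogp_mix) (use p0 ple1 q0 q1 iI t0 t1 in auto)
        finally show ?thesis using False by (simp add: h_def)
      qed
    qed (auto intro: nonneg_summable_on_complete)
    then show ?thesis using s1 s2 s3 by simp
  qed
  have Hp: "Hrate I c p = E / ennreal C" unfolding Hrate_def E_def C_def ..
  have Hp': "Hrate I c p' = E' / ennreal C'" unfolding Hrate_def E'_def C'I ..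
  show ?thesis
  proof (cases "E = top")
    case True
    have "ennreal (1-t) * E = top" using True t1 by (simp add: ennreal_mult_top)
    then have "E' = top" using key by (simp add: top_unique)
    then have "Hrate I c p' = top" using Hp' by (simp add: ennreal_top_divide)
    moreover have "Hrate I c p = top" using Hp True by (simp add: ennreal_top_divide)
    ultimately show ?thesis using P' p'pos by auto
  next
    case False
    then have Ee: "E = ennreal e" unfolding e_def by (cases E) auto
    have HpE: "Hrate I c p = ennreal (e / C)" using Hp Ee e0 C0 by (simp add: divide_ennreal)
    have gt: "Hrate I c p' > Hrate I c p"
    proof (cases "E' = top")
      case True
      then have "Hrate I c p' = top" using Hp' by (simp add: ennreal_top_divide)
      then show ?thesis using HpE by simp
    next
      case False
      then obtain e' where Ee': "E' = ennreal e'" and e'0: "e' \<ge> 0" by (cases E') auto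
      have "e * D / (q k * C) \<ge> 0" using e0 D0 qk0 C0 by simp
      then have "- ln t \<ge> 0" using Lt by linarith
      then have L0: "L \<ge> 0" unfolding L_def using t0 qk0
        by (intro mult_nonneg_nonneg) auto
      have "ennreal ((1-t) * e + L) \<le> ennreal e'"
        using key Ee Ee' t1 e0 L0 by (simp add: ennreal_mult ennreal_plus[symmetric])
      then have ee: "(1-t) * e + L \<le> e'" using e'0 by simp
      have "L * C = (t * q k * C) * (- ln t)" unfolding L_def by (simp add: algebra_simps)
      moreover have "(t * q k * C) * (- ln t) \<ge> t * q k * C * (e * D / (q k * C) + 1)"
        using Lt t0 qk0 C0 by (intro mult_left_mono) auto
      ultimately have "L * C \<ge> t * q k * C * (e * D / (q k * C) + 1)" by simp
      also have "t * q k * C * (e * D / (q k * C) + 1) = t * e * D + t * q k * C"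
        using qk0 C0 by (simp add: field_simps)
      finally have LC: "L * C \<ge> t * e * D + t * q k * C" .
      have "t * q k * C > 0" using t0 qk0 C0 by simp
      moreover have "((1-t) * e + L) * C \<le> e' * C" using ee C0 by (intro mult_right_mono) auto
      moreover have "((1-t) * e + L) * C = (1-t) * e * C + L * C" by (simp add: algebra_simps)
      moreover have "e * C' = (1-t) * e * C + t * e * D" unfolding C'_def by (simp add: algebra_simps)
      ultimately have "e * C' < e' * C" using LC by linarith
      then have "e / C < e' / C'" using C0 C'0 by (simp add: divide_less_eq less_divide_eq field_simps)
      then show ?thesis using HpE Hp' Ee' e'0 C'0 e0 C0
        by (simp add: divide_ennreal ennreal_less_iff divide_nonneg_pos)
    qed
    show ?thesis using gt P' p'pos by (auto intro: less_imp_le)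
  qed
qed

end
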